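(* Let $m,n\ge 2$ and let $\mathcal{A}$ be an $m$th order $n$-dimensional Hankel tensor with entries $a_{i_1\cdots i_m}=v_{i_1+\cdots+i_m-m}$ for a real vector $v=(v_0,\dots,v_{(n-1)m})^\top$. Let $\mathcal{P}$ be its associated plane tensor. If $\mathcal{A}$ is copositive, then $\mathcal{P}$ is copositive. If $m$ is even and $\mathcal{A}$ is positive semi-definite, then $\mathcal{P}$ is positive semi-definite.
   Context: For a real $l$th order $d$-dimensional tensor $\mathcal{B}=(b_{i_1\cdots i_l})$ and $x\in\mathbb{R}^d$, $\mathcal{B}x^l=\sum_{i_1,\dots,i_l=1}^d b_{i_1\cdots i_l}x_{i_1}\cdots x_{i_l}$. $\mathcal{B}$ is copositive if $\mathcal{B}x^l\ge0$ for all $x\in\mathbb{R}^d$ with $x\ge 0$; for even $l$, $\mathcal{B}$ is positive semi-definite if $\mathcal{B}x^l\ge 0$ for all $x\in\mathbb{R}^d$. For a nonnegative integer $k$, $s(k,m,n)$ denotes the number of ordered tuples $(i_1,\dots,i_m)$ with $i_j\in\{1,\dots,n\}$ and $i_1+\cdots+i_m-m=k$. The associated plane tensor of $\mathcal{A}$ is the symmetric tensor $\mathcal{P}=(p_{i_1\cdots i_{(n-1)m}})$ of order $(n-1)m$ and dimension $2$ defined by $p_{i_1\cdots i_{(n-1)m}}=\dfrac{s(k,m,n)\,v_k}{\binom{(n-1)m}{k}}$, where $k=i_1+\cdots+i_{(n-1)m}-(n-1)m$ and $i_j\in\{1,2\}$. *)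

theory Defs
  imports Complex_Main
begin

definition index_tuples :: "nat \<Rightarrow> nat \<Rightarrow> nat list set" where
  "index_tuples l d = {is. length is = l \<and> set is \<subseteq> {1..d}}"

text \<open>Vectors x in R^d are functions nat => real, only the values on {1..d} matter.\<close>
definition tensor_form :: "nat \<Rightarrow> nat \<Rightarrow> (nat list \<Rightarrow> real) \<Rightarrow> (nat \<Rightarrow> real) \<Rightarrow> real" where
  "tensor_form l d B x = (\<Sum>is\<in>index_tuples l d. B is * prod_list (map x is))"

definition copositive_tensor :: "nat \<Rightarrow> nat \<Rightarrow> (nat list \<Rightarrow> real) \<Rightarrow> bool" where
  "copositive_tensor l d B \<longleftrightarrow>
     (\<forall>x :: nat \<Rightarrow> real. (\<forall>i\<in>{1..d}. 0 \<le> x i) \<longrightarrow> 0 \<le> tensor_form l d B x)"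

definition psd_tensor :: "nat \<Rightarrow> nat \<Rightarrow> (nat list \<Rightarrow> real) \<Rightarrow> bool" where
  "psd_tensor l d B \<longleftrightarrow> (\<forall>x :: nat \<Rightarrow> real. 0 \<le> tensor_form l d B x)"

definition hankel_tensor :: "nat \<Rightarrow> (nat \<Rightarrow> real) \<Rightarrow> nat list \<Rightarrow> real" where
  "hankel_tensor m v = (\<lambda>is. v (sum_list is - m))"

definition s_count :: "nat \<Rightarrow> nat \<Rightarrow> nat \<Rightarrow> nat" where
  "s_count k m n = card {is \<in> index_tuples m n. sum_list is - m = k}"

definition plane_tensor :: "nat \<Rightarrow> nat \<Rightarrow> (nat \<Rightarrow> real) \<Rightarrow> nat list \<Rightarrow> real" where
  "plane_tensor m n v = (\<lambda>is. let k = sum_list is - (n - 1) * m in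
       real (s_count k m n) * v k / real (((n - 1) * m) choose k))"

end

theory Submission
  imports Defs
begin

lemma fin_tuples: "finite (index_tuples l d)"
proof -
  have "index_tuples l d = {xs. set xs \<subseteq> {1..d} \<and> length xs = l}"
    unfolding index_tuples_def by auto
  thus ?thesis using finite_lists_length_eq[of "{1..d}" l] by simp
qed

lemma tuples_Suc: "index_tuples (Suc l) d = (\<lambda>(i,is). i#is) ` ({1..d} \<times> index_tuples l d)"
proof (rule set_eqI)
  fix xs show "xs \<in> index_tuples (Suc l) d \<longleftrightarrow> xs \<in> (\<lambda>(i,is). i#is) ` ({1..d} \<times> index_tuples l d)"
  proof
    assume "xs \<in> index_tuples (Suc l) d"
    then obtain a ys where "xs = a # ys" "a \<in> {1..d}" "ys \<in> index_tuples l d"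
      unfolding index_tuples_def by (cases xs) auto
    thus "xs \<in> (\<lambda>(i,is). i#is) ` ({1..d} \<times> index_tuples l d)" by force
  next
    assume "xs \<in> (\<lambda>(i,is). i#is) ` ({1..d} \<times> index_tuples l d)"
    thus "xs \<in> index_tuples (Suc l) d" unfolding index_tuples_def by auto
  qed
qed

lemma sum_tuples_Suc:
  "(\<Sum>is\<in>index_tuples (Suc l) d. F is) = (\<Sum>i\<in>{1..d}. \<Sum>is\<in>index_tuples l d. F (i#is))"
proof -
  have inj: "inj_on (\<lambda>(i,is). i#is) ({1..d} \<times> index_tuples l d)"
    by (auto simp: inj_on_def)
  have "(\<Sum>is\<in>index_tuples (Suc l) d. F is) = (\<Sum>p\<in>{1..d} \<times> index_tuples l d. F ((\<lambda>(i,is). i#is) p))"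
    unfolding tuples_Suc by (rule sum.reindex[OF inj, unfolded comp_def])
  also have "\<dots> = (\<Sum>i\<in>{1..d}. \<Sum>is\<in>index_tuples l d. F (i#is))"
    unfolding sum.cartesian_product by (rule sum.cong) auto
  finally show ?thesis .
qed

lemma tuple_bounds: "is \<in> index_tuples l d \<Longrightarrow> l \<le> sum_list is \<and> sum_list is \<le> d * l"
proof (induction "is" arbitrary: l)
  case Nil thus ?case by (simp add: index_tuples_def)
next
  case (Cons a xs)
  then obtain l' where l: "l = Suc l'" and xs: "xs \<in> index_tuples l' d" and a: "a \<in> {1..d}"
    by (auto simp: index_tuples_def)
  from Cons.IH[OF xs] a l show ?case by auto
qed

lemma count2:
  "(\<Sum>is\<in>index_tuples L 2. if sum_list is - L = k then 1 else 0 :: nat) = L choose k"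
proof (induction L arbitrary: k)
  case 0
  have "index_tuples 0 2 = {[]}" by (auto simp: index_tuples_def)
  thus ?case by simp
next
  case (Suc L)
  have "(\<Sum>is\<in>index_tuples (Suc L) 2. if sum_list is - Suc L = k then 1 else 0 :: nat)
     = (\<Sum>is\<in>index_tuples L 2. if sum_list is - L = k then 1 else 0)
       + (\<Sum>is\<in>index_tuples L 2. if Suc (sum_list is - L) = k then 1 else 0)"
  proof -
    have e: "{1..2::nat} = {1,2}" by auto
    have "(\<Sum>is\<in>index_tuples L 2. if sum_list (2#is) - Suc L = k then 1 else 0 :: nat)
        = (\<Sum>is\<in>index_tuples L 2. if Suc (sum_list is - L) = k then 1 else 0)"
      by (rule sum.cong) (auto dest: tuple_bounds)
    thus ?thesis unfolding sum_tuples_Suc e by simp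
  qed
  also have "\<dots> = Suc L choose k"
  proof (cases k)
    case 0
    thus ?thesis using Suc.IH[of 0] by simp
  next
    case (Suc k')
    have "(\<Sum>is\<in>index_tuples L 2. if Suc (sum_list is - L) = k then 1 else 0 :: nat)
        = (\<Sum>is\<in>index_tuples L 2. if sum_list is - L = k' then 1 else 0)"
      using Suc by simp
    thus ?thesis using Suc.IH[of k] Suc.IH[of k'] Suc by simp
  qed
  finally show ?case .
qed

lemma card_eq_ind: "finite T \<Longrightarrow> card {x\<in>T. P x} = (\<Sum>x\<in>T. if P x then 1 else 0 :: nat)"
  by (simp add: sum.If_cases Int_def)

lemma group_sum:
  fixes G :: "nat \<Rightarrow> real"
  assumes "finite T" "\<And>x. x \<in> T \<Longrightarrow> f x \<in> {0..L}"
  shows "(\<Sum>x\<in>T. G (f x)) = (\<Sum>k\<in>{0..L}. real (card {x\<in>T. f x = k}) * G k)"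
proof -
  have "(\<Sum>x\<in>T. G (f x)) = (\<Sum>k\<in>{0..L}. \<Sum>x\<in>{x\<in>T. f x = k}. G (f x))"
    by (rule sum.group[symmetric]) (use assms in auto)
  also have "\<dots> = (\<Sum>k\<in>{0..L}. real (card {x\<in>T. f x = k}) * G k)"
    by (rule sum.cong) auto
  finally show ?thesis .
qed

lemma prod_pow:
  fixes y :: "nat \<Rightarrow> real"
  assumes "is \<in> index_tuples l n"
  shows "prod_list (map (\<lambda>i. y 1 ^ (n - i) * y 2 ^ (i - 1)) is)
         = y 1 ^ (n * l - sum_list is) * y 2 ^ (sum_list is - l)"
  using assms
proof (induction "is" arbitrary: l)
  case Nil thus ?case by (simp add: index_tuples_def)
next
  case (Cons a xs)
  then obtain l' where l: "l = Suc l'" and xs: "xs \<in> index_tuples l' n" and a: "a \<in> {1..n}"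
    by (auto simp: index_tuples_def)
  from tuple_bounds[OF xs] have b: "l' \<le> sum_list xs" "sum_list xs \<le> n * l'" by auto
  have e1: "n * l - sum_list (a#xs) = (n - a) + (n * l' - sum_list xs)"
    using a b l by (simp add: algebra_simps)
  have e2: "sum_list (a#xs) - l = (a - 1) + (sum_list xs - l')"
    using a b l by simp
  show ?case using Cons.IH[OF xs] unfolding e1 e2 by (simp add: power_add)
qed

lemma key:
  fixes y :: "nat \<Rightarrow> real"
  assumes "n \<ge> 1"
  defines "x \<equiv> (\<lambda>i. y 1 ^ (n - i) * y 2 ^ (i - 1))"
  shows "tensor_form ((n - 1) * m) 2 (plane_tensor m n v) y = tensor_form m n (hankel_tensor m v) x"
proof -
  let ?L = "(n - 1) * m"
  define H where "H k = real (s_count k m n) * v k / real (?L choose k) * (y 1 ^ (?L - k) * y 2 ^ k)" for k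
  define G where "G k = v k * (y 1 ^ (?L - k) * y 2 ^ k)" for k
  have "tensor_form ?L 2 (plane_tensor m n v) y
      = (\<Sum>is\<in>index_tuples ?L 2. H (sum_list is - ?L))"
    unfolding tensor_form_def
  proof (rule sum.cong)
    fix "is" assume i: "is \<in> index_tuples ?L 2"
    have mm: "map y is = map (\<lambda>i. y 1 ^ (2 - i) * y 2 ^ (i - 1)) is"
    proof (rule map_cong)
      fix a assume "a \<in> set is"
      hence "a = 1 \<or> a = 2" using i by (auto simp: index_tuples_def)
      thus "y a = y 1 ^ (2 - a) * y 2 ^ (a - 1)" by auto
    qed simp
    have p: "prod_list (map y is) = y 1 ^ (2 * ?L - sum_list is) * y 2 ^ (sum_list is - ?L)"
      unfolding mm by (rule prod_pow[OF i])
    have b: "?L \<le> sum_list is" "sum_list is \<le> 2 * ?L" using tuple_bounds[OF i] by auto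
    hence "2 * ?L - sum_list is = ?L - (sum_list is - ?L)" by simp
    thus "plane_tensor m n v is * prod_list (map y is) = H (sum_list is - ?L)"
      unfolding p H_def plane_tensor_def Let_def by simp
  qed simp
  also have "\<dots> = (\<Sum>k\<in>{0..?L}. real (card {is\<in>index_tuples ?L 2. sum_list is - ?L = k}) * H k)"
    by (rule group_sum) (auto simp: fin_tuples dest: tuple_bounds)
  also have "\<dots> = (\<Sum>k\<in>{0..?L}. real (s_count k m n) * G k)"
  proof (rule sum.cong)
    fix k assume k: "k \<in> {0..?L}"
    have "card {is\<in>index_tuples ?L 2. sum_list is - ?L = k} = ?L choose k"
      using count2[of ?L k] by (simp add: card_eq_ind fin_tuples)
    moreover have "real (?L choose k) \<noteq> 0" using k by simp
    ultimately show "real (card {is\<in>index_tuples ?L 2. sum_list is - ?L = k}) * H k = real (s_count k m n) * G k"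
      unfolding H_def G_def by simp
  qed simp
  also have "\<dots> = (\<Sum>k\<in>{0..?L}. real (card {is\<in>index_tuples m n. sum_list is - m = k}) * G k)"
    unfolding s_count_def ..
  also have "\<dots> = (\<Sum>is\<in>index_tuples m n. G (sum_list is - m))"
  proof (rule group_sum[symmetric])
    fix "is" assume "is \<in> index_tuples m n"
    from tuple_bounds[OF this] show "sum_list is - m \<in> {0..?L}"
      by (simp add: algebra_simps diff_le_mono)
  qed (simp add: fin_tuples)
  also have "\<dots> = tensor_form m n (hankel_tensor m v) x"
    unfolding tensor_form_def
  proof (rule sum.cong)
    fix "is" assume i: "is \<in> index_tuples m n"
    have b: "m \<le> sum_list is" "sum_list is \<le> n * m" using tuple_bounds[OF i] by auto
    hence e: "n * m - sum_list is = ?L - (sum_list is - m)" by (simp add: algebra_simps)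
    show "G (sum_list is - m) = hankel_tensor m v is * prod_list (map x is)"
      unfolding x_def prod_pow[OF i] G_def hankel_tensor_def e by simp
  qed simp
  finally show ?thesis .
qed

theorem theorem1:
  fixes m n :: nat and v :: "nat \<Rightarrow> real"
  assumes "m \<ge> 2" and "n \<ge> 2"
  shows "(copositive_tensor m n (hankel_tensor m v) \<longrightarrow>
            copositive_tensor ((n - 1) * m) 2 (plane_tensor m n v))
       \<and> (even m \<and> psd_tensor m n (hankel_tensor m v) \<longrightarrow>
            psd_tensor ((n - 1) * m) 2 (plane_tensor m n v))"
proof (intro conjI impI)
  assume c: "copositive_tensor m n (hankel_tensor m v)"
  show "copositive_tensor ((n - 1) * m) 2 (plane_tensor m n v)"
    unfolding copositive_tensor_def
  proof (intro allI impI)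
    fix y :: "nat \<Rightarrow> real" assume y: "\<forall>i\<in>{1..2}. 0 \<le> y i"
    have "0 \<le> tensor_form m n (hankel_tensor m v) (\<lambda>i. y 1 ^ (n - i) * y 2 ^ (i - 1))"
      using c y unfolding copositive_tensor_def by auto
    thus "0 \<le> tensor_form ((n - 1) * m) 2 (plane_tensor m n v) y"
      using key[where n=n and y=y and m=m and v=v] assms by simp
  qed
next
  assume c: "even m \<and> psd_tensor m n (hankel_tensor m v)"
  show "psd_tensor ((n - 1) * m) 2 (plane_tensor m n v)"
    unfolding psd_tensor_def
  proof
    fix y :: "nat \<Rightarrow> real"
    have "0 \<le> tensor_form m n (hankel_tensor m v) (\<lambda>i. y 1 ^ (n - i) * y 2 ^ (i - 1))"
      using c unfolding psd_tensor_def by auto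
    thus "0 \<le> tensor_form ((n - 1) * m) 2 (plane_tensor m n v) y"
      using key[where n=n and y=y and m=m and v=v] assms by simp
  qed
qed

end
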